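(* For all $y_1,y_2\in\mathcal{Y}$ and all $\lambda>0$, $$\mathrm{EUBO}_\lambda(y_1,y_2)\;\ge\;\mathrm{EUBO}_0(y_1,y_2)-\lambda C,\qquad C=\frac{e^{-1/2}}{\sqrt{2}}.$$
   Context: Let $\mathcal{Y}\subseteq\mathbb{R}^k$. Let $g$ be a random function on $\mathbb{R}^k$ distributed as a Gaussian process; all probabilities and expectations are with respect to the law of $g$ and of the response below. For a query $(y_1,y_2)$ and noise level $\lambda\ge0$, the response $r(y_1,y_2)\in\{1,2\}$ is random with: if $\lambda>0$, $\mathbb{P}(r(y_1,y_2)=1\mid g)=\Phi\big((g(y_1)-g(y_2))/(\sqrt{2}\lambda)\big)$ and $\mathbb{P}(r(y_1,y_2)=2\mid g)=1-\mathbb{P}(r(y_1,y_2)=1\mid g)$, where $\Phi$ is the standard normal CDF; if $\lambda=0$, $r(y_1,y_2)=1$ when $g(y_1)>g(y_2)$ and $2$ when $g(y_1)<g(y_2)$ (ties arbitrary). Define $\mathrm{EUBO}_\lambda(y_1,y_2)=\mathbb{E}[g(y_{r(y_1,y_2)})]$, i.e. the expected utility of the option chosen by the response; in particular $\mathrm{EUBO}_0(y_1,y_2)=\mathbb{E}[\max\{g(y_1),g(y_2)\}]$. *)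

theory Defs
  imports "HOL-Probability.Probability"
begin

definition Phi :: "real \<Rightarrow> real" where
  "Phi x = (LBINT t:{..x}. std_normal_density t)"

definition gaussian_rv :: "'w measure \<Rightarrow> ('w \<Rightarrow> real) \<Rightarrow> bool" where
  "gaussian_rv M X \<longleftrightarrow>
     X \<in> borel_measurable M \<and>
     ((\<exists>\<mu> \<sigma>. \<sigma> > 0 \<and> distributed M lborel X (normal_density \<mu> \<sigma>))
      \<or> (\<exists>c. AE \<omega> in M. X \<omega> = c))"

definition gaussian_process :: "'w measure \<Rightarrow> ('y \<Rightarrow> 'w \<Rightarrow> real) \<Rightarrow> bool" where
  "gaussian_process M g \<longleftrightarrow> prob_space M \<and>
     (\<forall>S a. finite S \<longrightarrow> gaussian_rv M (\<lambda>\<omega>. \<Sum>y\<in>S. a y * g y \<omega>))"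

(* Probability (conditional on g) that the response to (y1,y2) is 1, for noise lambda > 0 *)
definition resp1_prob :: "real \<Rightarrow> real \<Rightarrow> real \<Rightarrow> real" where
  "resp1_prob lam u v = Phi ((u - v) / (sqrt 2 * lam))"

(* EUBO_lambda(y1,y2) = E[g(y_r)] = E[ E[g(y_r) | g] ]
   = E[ g(y1) P(r=1|g) + g(y2) P(r=2|g) ]  for lambda > 0 *)
definition EUBO :: "'w measure \<Rightarrow> ('y \<Rightarrow> 'w \<Rightarrow> real) \<Rightarrow> real \<Rightarrow> 'y \<Rightarrow> 'y \<Rightarrow> real" where
  "EUBO M g lam y1 y2 =
     (if lam = 0 then (\<integral>\<omega>. max (g y1 \<omega>) (g y2 \<omega>) \<partial>M)
      else (\<integral>\<omega>. g y1 \<omega> * resp1_prob lam (g y1 \<omega>) (g y2 \<omega>)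
               + g y2 \<omega> * (1 - resp1_prob lam (g y1 \<omega>) (g y2 \<omega>)) \<partial>M))"

end

theory Submission imports Defs "HOL-Real_Asymp.Real_Asymp" begin

lemma Phi_Q: "Phi x = 1 - (LBINT t:{x<..}. std_normal_density t)"
proof -
  have "(\<integral>t. std_normal_density t \<partial>lborel) = (\<integral>t. std_normal_density t * indicator {..x} t + std_normal_density t * indicator {x<..} t \<partial>lborel)"
    by (intro Bochner_Integration.integral_cong) (auto split: split_indicator)
  also have "\<dots> = (\<integral>t. std_normal_density t * indicator {..x} t \<partial>lborel) + (\<integral>t. std_normal_density t * indicator {x<..} t \<partial>lborel)"
    by (intro Bochner_Integration.integral_add) (auto intro!: integrable_real_mult_indicator)
  finally show ?thesis by (simp add: Phi_def set_lebesgue_integral_def mult.commute)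
qed

lemma Phi_neg: "Phi (-x) = 1 - Phi x"
proof -
  have "Phi (-x) = (\<integral>t. indicator {..-x} t * std_normal_density t \<partial>lborel)"
    by (simp add: Phi_def set_lebesgue_integral_def)
  also have "\<dots> = (\<integral>t. indicator {..-x} (-t) * std_normal_density (-t) \<partial>lborel)"
    using lborel_integral_real_affine[where c="-1" and t=0 and f="\<lambda>t. indicator {..-x} t * std_normal_density t"] by simp
  also have "\<dots> = (\<integral>t. indicator {x<..} t * std_normal_density t \<partial>lborel)"
    apply (intro integral_cong_AE)
      apply simp apply simp
    using AE_lborel_singleton[of x]
    by eventually_elim (auto simp: normal_density_def split: split_indicator)
  finally show ?thesis using Phi_Q[of x] by (simp add: set_lebesgue_integral_def)
qed

lemma phi_deriv: "((\<lambda>t. - std_normal_density t) has_real_derivative (t * std_normal_density t)) (at t)"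
  unfolding std_normal_density_def
  by (auto intro!: derivative_eq_intros simp: field_simps)

lemma tail_moment:
  assumes "x > 0"
  shows "set_integrable lborel {x<..} (\<lambda>t. t * std_normal_density t)"
    "(LBINT t:{x<..}. t * std_normal_density t) = std_normal_density x"
proof -
  have *: "((\<lambda>t. std_normal_density t) \<longlongrightarrow> 0) at_top"
    unfolding std_normal_density_def
    by real_asymp
  note F = interval_integral_FTC_nonneg[where a="ereal x" and b="\<infinity>" and F="\<lambda>t. - std_normal_density t"
     and f="\<lambda>t. t * std_normal_density t" and A="- std_normal_density x" and B=0]
  have c1: "(((\<lambda>t. - std_normal_density t) \<circ> real_of_ereal) \<longlongrightarrow> - std_normal_density x) (at_right (ereal x))"
    unfolding ereal_tendsto_simps std_normal_density_def
    by (intro tendsto_intros continuous_intros) auto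
  have c2: "(((\<lambda>t. - std_normal_density t) \<circ> real_of_ereal) \<longlongrightarrow> 0) (at_left \<infinity>)"
    unfolding ereal_tendsto_simps using tendsto_minus[OF *] by simp
  have f: "isCont (\<lambda>t. t * std_normal_density t) t" for t
    unfolding std_normal_density_def by (intro continuous_intros) auto
  have nn: "AE t in lborel. ereal x < ereal t \<longrightarrow> ereal t < \<infinity> \<longrightarrow> 0 \<le> t * std_normal_density t"
    using assms by auto
  from F[OF _ phi_deriv f nn c1 c2] show
    "set_integrable lborel {x<..} (\<lambda>t. t * std_normal_density t)"
    "(LBINT t:{x<..}. t * std_normal_density t) = std_normal_density x"
    by (auto simp: interval_lebesgue_integral_def)
qed

abbreviation "Qt x \<equiv> (LBINT t:{x<..}. std_normal_density t)"

lemma set_int_phi: "set_integrable lborel A std_normal_density" if "A \<in> sets borel"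
  using integrable_real_mult_indicator[of A lborel std_normal_density] that
  by (simp add: set_integrable_def mult.commute)

lemma mills:
  assumes "x > 0" shows "x * Qt x \<le> std_normal_density x"
proof -
  have "x * Qt x = (LBINT t:{x<..}. x * std_normal_density t)"
    by (simp add: set_integral_mult_right)
  also have "\<dots> \<le> (LBINT t:{x<..}. t * std_normal_density t)"
    apply (rule set_integral_mono)
    using set_int_phi[of "{x<..}"] tail_moment[OF assms]
      apply (auto simp: set_integrable_mult_right intro!: mult_right_mono)
    done
  also have "\<dots> = std_normal_density x" using tail_moment[OF assms] by simp
  finally show ?thesis .
qed

lemma Qt0: "Qt 0 = 1/2"
  using Phi_neg[of 0] Phi_Q[of 0] by simp

lemma phi_mono: "0 \<le> t \<Longrightarrow> t \<le> x \<Longrightarrow> std_normal_density x \<le> std_normal_density t"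
proof -
  assume a: "0 \<le> t" "t \<le> x"
  have "t^2 \<le> x^2" using a by (intro power_mono) auto
  thus ?thesis unfolding std_normal_density_def
    by (auto intro!: divide_right_mono)
qed

lemma Qt_small:
  assumes "0 \<le> x" shows "Qt x + x * std_normal_density x \<le> 1/2"
proof -
  have "(\<integral>t. indicator {x<..} t * std_normal_density t + std_normal_density x * indicator {0<..x} t \<partial>lborel)
     \<le> (\<integral>t. indicator {0<..} t * std_normal_density t \<partial>lborel)"
    apply (rule integral_mono)
    using set_int_phi[of "{x<..}"] set_int_phi[of "{0<..}"] assms
      apply (auto simp: set_integrable_def split: split_indicator intro!: phi_mono)
    done
  moreover have "(\<integral>t. indicator {x<..} t * std_normal_density t + std_normal_density x * indicator {0<..x} t \<partial>lborel)
     = Qt x + x * std_normal_density x"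
    apply (subst Bochner_Integration.integral_add)
    using set_int_phi[of "{x<..}"] assms
      apply (auto simp: set_integrable_def set_lebesgue_integral_def)
    done
  ultimately show ?thesis using Qt0 by (simp add: set_lebesgue_integral_def)
qed

lemma exp_half: "exp (-1/2::real) \<ge> 3/5"
proof -
  have "exp (1/2::real) * exp (1/2) = exp 1" by (simp flip: exp_add)
  hence "exp (1/2::real) ^ 2 < (5/3)^2" using e_less_272 by (simp add: power2_eq_square)
  hence "exp (1/2::real) < 5/3" by (rule power_less_imp_less_base) auto
  thus ?thesis by (simp add: exp_minus field_simps)
qed

lemma key_bound:
  assumes "0 \<le> x" shows "x * Qt x \<le> exp (-1/2) / 2"
proof -
  have phi1: "std_normal_density 1 = exp (-1/2) / sqrt (2*pi)"
    by (simp add: std_normal_density_def)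
  have sq: "2 \<le> sqrt (2*pi)" "sqrt (2*pi) \<le> 3"
    using pi_gt3 pi_less_4 by (auto simp: real_le_rsqrt real_sqrt_le_iff intro!: real_le_lsqrt)
  have c: "exp (-1/2::real) \<ge> 3/5" by (rule exp_half)
  have k: "std_normal_density 1 \<ge> 1/5"
    unfolding phi1 using sq c by (simp add: field_simps)
  have k2: "std_normal_density 1 \<le> exp (-1/2) / 2"
    unfolding phi1 using sq by (intro divide_left_mono) auto
  show ?thesis
  proof (cases "x \<ge> 1")
    case True
    have "x * Qt x \<le> std_normal_density x" using mills[of x] True by simp
    also have "\<dots> \<le> std_normal_density 1" using True by (intro phi_mono) auto
    finally show ?thesis using k2 by simp
  next
    case False
    have q: "Qt x \<le> 1/2 - x * std_normal_density 1"
      using Qt_small[OF assms] phi_mono[of x 1] assms False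
      by (smt (verit) mult_left_mono)
    have "x * Qt x \<le> x * (1/2 - x * std_normal_density 1)" using q assms by (intro mult_left_mono)
    also have "\<dots> \<le> exp (-1/2) / 2"
    proof -
      have "x * (1/2 - x * std_normal_density 1) \<le> x/2 - x*x/5"
        using k assms by (simp add: algebra_simps mult_left_mono)
      also have "\<dots> \<le> 3/10" proof -
        have "0 \<le> (1-x)*(3/2-x)" using False by (intro mult_nonneg_nonneg) auto
        moreover have "(1-x)*(3/2-x) = 3/2 - 5/2*x + x*x" by (simp add: algebra_simps field_simps)
        ultimately have "0 \<le> 3/2 - 5/2*x + x*x" by simp
        thus ?thesis by linarith
      qed
      finally show ?thesis using c by simp
    qed
    finally show ?thesis .
  qed
qed

lemma Qt_nonneg: "0 \<le> Qt x"
  unfolding set_lebesgue_integral_def by (intro Bochner_Integration.integral_nonneg) (auto split: split_indicator)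

lemma Phi_nonneg: "0 \<le> Phi x"
  unfolding Phi_def set_lebesgue_integral_def by (intro Bochner_Integration.integral_nonneg) (auto split: split_indicator)

lemma Phi_le1: "Phi x \<le> 1"
  using Phi_Q[of x] Qt_nonneg[of x] by simp

lemma Phi_mono: "mono Phi"
proof (rule monoI)
  fix x y :: real assume "x \<le> y"
  thus "Phi x \<le> Phi y"
    unfolding Phi_def set_lebesgue_integral_def
    using set_int_phi[of "{..x}"] set_int_phi[of "{..y}"]
    by (intro integral_mono) (auto simp: set_integrable_def split: split_indicator)
qed

lemma Phi_measurable[measurable]: "Phi \<in> borel_measurable borel"
  by (rule borel_measurable_mono[OF Phi_mono])

lemma pointwise:
  assumes "lam > 0"
  shows "max u v - (u * resp1_prob lam u v + v * (1 - resp1_prob lam u v)) \<le> lam * (exp (-1/2) / sqrt 2)"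
proof -
  define s where "s = sqrt 2 * lam"
  have s: "s > 0" using assms by (simp add: s_def)
  define x where "x = (u - v) / s"
  have uv: "u - v = s * x" using s by (simp add: x_def)
  have r: "resp1_prob lam u v = Phi x" by (simp add: resp1_prob_def x_def s_def)
  have sc: "s * (exp (-1/2) / 2) = lam * (exp (-1/2) / sqrt 2)"
    unfolding s_def by (simp add: field_simps real_sqrt_mult[symmetric] del: real_sqrt_mult)
  show ?thesis
  proof (cases "u \<ge> v")
    case True
    hence x0: "x \<ge> 0" using s by (simp add: x_def)
    have "max u v - (u * resp1_prob lam u v + v * (1 - resp1_prob lam u v)) = s * (x * Qt x)"
    proof -
      have "s*(x*Qt x) = (u-v)*Qt x" using uv by simp
      thus ?thesis using True by (simp add: r Phi_Q algebra_simps)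
    qed
    also have "\<dots> \<le> s * (exp (-1/2) / 2)" using key_bound[OF x0] s by (intro mult_left_mono) auto
    finally show ?thesis using sc by linarith
  next
    case False
    hence x0: "-x \<ge> 0" using s by (simp add: x_def divide_nonpos_pos)
    have ph: "Phi x = Qt (-x)" using Phi_neg[of "-x"] Phi_Q[of "-x"] by simp
    have "max u v - (u * resp1_prob lam u v + v * (1 - resp1_prob lam u v)) = s * ((-x) * Qt (-x))"
    proof -
      have vu: "v-u = -(s*x)" using uv by simp
      have "s*((-x)*Qt (-x)) = (v-u)*Phi x" unfolding vu ph by simp
      thus ?thesis using False by (simp add: r algebra_simps)
    qed
    also have "\<dots> \<le> s * (exp (-1/2) / 2)" using key_bound[OF x0] s by (intro mult_left_mono) auto
    finally show ?thesis using sc by linarith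
  qed
qed

lemma gaussian_integrable:
  assumes "gaussian_rv M X" "prob_space M"
  shows "integrable M X"
proof -
  have m[measurable]: "X \<in> borel_measurable M" using assms unfolding gaussian_rv_def by blast
  from assms(1) consider (n) \<mu> \<sigma> where "\<sigma> > 0" "distributed M lborel X (normal_density \<mu> \<sigma>)"
    | (c) c where "AE \<omega> in M. X \<omega> = c"
    unfolding gaussian_rv_def by blast
  thus ?thesis
  proof cases
    case n
    have "integrable lborel (\<lambda>x. normal_density \<mu> \<sigma> x * id x)"
      using integrable_normal_moment_nz_1 n(1) by simp
    thus ?thesis using distributed_integrable[OF n(2), of id] by simp
  next
    case c
    interpret prob_space M by fact
    have "integrable M (\<lambda>_. c)" by simp
    thus ?thesis using integrable_cong_AE[of X M "\<lambda>_. c"] c by simp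
  qed
qed

theorem mainTheorem4:
  fixes M :: "'w measure"
    and g :: "real ^ 'k \<Rightarrow> 'w \<Rightarrow> real"
    and Y :: "(real ^ 'k) set"
    and y1 y2 :: "real ^ 'k"
    and lam :: real
  assumes "gaussian_process M g"
    and "y1 \<in> Y" and "y2 \<in> Y"
    and "lam > 0"
  shows "EUBO M g lam y1 y2 \<ge> EUBO M g 0 y1 y2 - lam * (exp (-1/2) / sqrt 2)"
proof -
  have ps: "prob_space M" using assms(1) unfolding gaussian_process_def by blast
  interpret prob_space M by fact
  have gi: "integrable M (g y)" for y
  proof -
    have all: "\<forall>S a. finite S \<longrightarrow> gaussian_rv M (\<lambda>\<omega>. \<Sum>y\<in>S. a y * g y \<omega>)"
      using assms(1) unfolding gaussian_process_def by (rule conjunct2)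
    have "gaussian_rv M (\<lambda>\<omega>. \<Sum>y'\<in>{y}. (\<lambda>_. 1::real) y' * g y' \<omega>)"
      using all[rule_format, of "{y}" "\<lambda>_. 1"] by simp
    hence "gaussian_rv M (g y)" by simp
    thus ?thesis by (rule gaussian_integrable[OF _ ps])
  qed
  note [measurable] = borel_measurable_integrable[OF gi]
  let ?F = "\<lambda>\<omega>. max (g y1 \<omega>) (g y2 \<omega>)"
  let ?G = "\<lambda>\<omega>. g y1 \<omega> * resp1_prob lam (g y1 \<omega>) (g y2 \<omega>)
               + g y2 \<omega> * (1 - resp1_prob lam (g y1 \<omega>) (g y2 \<omega>))"
  let ?C = "lam * (exp (-1/2) / sqrt 2)"
  have Fi: "integrable M ?F" using gi by auto
  have Gm: "?G \<in> borel_measurable M" unfolding resp1_prob_def by measurable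
  have Gi: "integrable M ?G"
  proof (rule Bochner_Integration.integrable_bound[OF _ Gm])
    show "integrable M (\<lambda>\<omega>. \<bar>g y1 \<omega>\<bar> + \<bar>g y2 \<omega>\<bar>)" using gi by auto
    show "AE \<omega> in M. norm (?G \<omega>) \<le> norm (\<bar>g y1 \<omega>\<bar> + \<bar>g y2 \<omega>\<bar>)"
    proof (rule AE_I2)
      fix \<omega>
      define p where "p = resp1_prob lam (g y1 \<omega>) (g y2 \<omega>)"
      have p: "0 \<le> p" "p \<le> 1" unfolding p_def resp1_prob_def using Phi_nonneg Phi_le1 by auto
      have "\<bar>g y1 \<omega> * p + g y2 \<omega> * (1 - p)\<bar> \<le> \<bar>g y1 \<omega>\<bar> * p + \<bar>g y2 \<omega>\<bar> * (1 - p)"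
        using p by (simp add: abs_mult abs_triangle_ineq[THEN order_trans])
      also have "\<dots> \<le> \<bar>g y1 \<omega>\<bar> + \<bar>g y2 \<omega>\<bar>" using p
        by (smt (verit) abs_ge_zero mult_left_le mult_nonneg_nonneg)
      finally show "norm (?G \<omega>) \<le> norm (\<bar>g y1 \<omega>\<bar> + \<bar>g y2 \<omega>\<bar>)" by (simp add: p_def)
    qed
  qed
  have "EUBO M g 0 y1 y2 - ?C = (\<integral>\<omega>. ?F \<omega> - ?C \<partial>M)"
    using Fi by (simp add: EUBO_def prob_space)
  also have "\<dots> \<le> (\<integral>\<omega>. ?G \<omega> \<partial>M)"
    using Fi Gi pointwise[OF assms(4)] by (intro integral_mono) (auto simp: algebra_simps)
  also have "\<dots> = EUBO M g lam y1 y2" using assms(4) by (simp add: EUBO_def)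
  finally show ?thesis .
qed

end
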